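(* Let $(X,d)$ be a complete metric space and $\mathcal{S}=(X,(\phi_j)_{j=1}^L,(p_j)_{j=1}^L)$ an IFS with probabilities consisting of Banach contractions, and let $\alpha_\mathcal{S}:=\max\{\mathrm{Lip}(\phi_j):j=1,\dots,L\}$. Let $\varepsilon>0$, $\hat{X}$ a proper $\varepsilon$-net of $X$, $r:X\to\hat{X}$ a Borel measurable $\varepsilon$-projection, and $\hat{\mathcal{S}}:=(\hat{X},(\hat\phi_j)_{j=1}^L,(p_j)_{j=1}^L)$ with $\hat\phi_j:=(r\circ\phi_j)|_{\hat{X}}$. Then for any $\nu\in\mathcal{P}(\hat{X})$ and $n\in\mathbb{N}$, $$d_{MK}\big(e^\sharp(M^n_{\hat{\mathcal{S}}}(\nu)),\mu_\mathcal{S}\big)\le\frac{\varepsilon}{1-\alpha_\mathcal{S}}+\alpha_\mathcal{S}^n\,d_{MK}(e^\sharp(\nu),\mu_\mathcal{S}),$$ where $\mu_\mathcal{S}$ is the Hutchinson measure of $\mathcal{S}$. In particular, there is $n_0\in\mathbb{N}$ such that for every $n\ge n_0$, $d_{MK}(e^\sharp(M^n_{\hat{\mathcal{S}}}(\nu)),\mu_\mathcal{S})\le\frac{2\varepsilon}{1-\alpha_\mathcal{S}}$.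
   Context: An IFS with probabilities is $(X,(\phi_j)_{j=1}^L,(p_j)_{j=1}^L)$ with continuous $\phi_j:X\to X$ and $p_j>0$, $\sum p_j=1$; a Banach contraction is a map with Lipschitz constant $<1$. $\mathcal{P}(Y)$: Borel probability measures on $Y$ with compact support. $w^\sharp\mu(B)=\mu(w^{-1}(B))$. The Markov operator is $M_\mathcal{S}(\mu)=\sum_j p_j\phi_j^\sharp\mu$ on $\mathcal{P}(X)$, and $M_{\hat{\mathcal{S}}}(\nu)=\sum_j p_j\hat\phi_j^\sharp\nu$ on $\mathcal{P}(\hat X)$. $d_{MK}(\mu,\nu)=\sup\{|\int f d\mu-\int f d\nu|:f:X\to\mathbb{R},\ \mathrm{Lip}(f)\le1\}$. The Hutchinson measure $\mu_\mathcal{S}$ is the unique $\mu_\mathcal{S}\in\mathcal{P}(X)$ with $M_\mathcal{S}(\mu_\mathcal{S})=\mu_\mathcal{S}$ (and $M^k_\mathcal{S}(\mu)\to\mu_\mathcal{S}$ in $d_{MK}$ for every $\mu$). $e:\hat X\to X$ is the inclusion, so $e^\sharp\nu(B)=\nu(B\cap\hat X)$. $\hat X$ is an $\varepsilon$-net if every $x\in X$ is within $\varepsilon$ of some point of $\hat X$; proper if $D\cap\hat X$ is finite for every bounded $D$. $r$ is an $\varepsilon$-projection if $r|_{\hat X}=\mathrm{id}$ and $d(x,r(x))\le\varepsilon$ for all $x$. *)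

theory Defs
  imports "HOL-Probability.Probability"
begin

definition lip_const :: "('a::metric_space \<Rightarrow> 'b::metric_space) \<Rightarrow> real" where
  "lip_const f = Inf {C. 0 \<le> C \<and> C-lipschitz_on UNIV f}"

definition banach_contraction :: "('a::metric_space \<Rightarrow> 'a) \<Rightarrow> bool" where
  "banach_contraction f \<longleftrightarrow> (\<exists>C<1. C-lipschitz_on UNIV f)"

text \<open>P(Y): Borel probability measures on the subspace Y having compact support
  (i.e. concentrated on a compact subset of Y).\<close>
definition probs_cs :: "'a::metric_space set \<Rightarrow> 'a measure set" where
  "probs_cs Y = {M. sets M = sets (restrict_space borel Y) \<and> space M = Y \<and> prob_space M \<and>
      (\<exists>K. compact K \<and> K \<subseteq> Y \<and> emeasure M K = 1)}"

definition markov_op :: "nat \<Rightarrow> (nat \<Rightarrow> real) \<Rightarrow> (nat \<Rightarrow> 'a \<Rightarrow> 'a) \<Rightarrow> 'a measure \<Rightarrow> 'a measure" where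
  "markov_op L p f \<mu> = measure_of (space \<mu>) (sets \<mu>)
      (\<lambda>A. \<Sum>j<L. ennreal (p j) * emeasure (distr \<mu> \<mu> (f j)) A)"

definition d_MK :: "'a::metric_space measure \<Rightarrow> 'a measure \<Rightarrow> real" where
  "d_MK \<mu> \<nu> = Sup {\<bar>integral\<^sup>L \<mu> f - integral\<^sup>L \<nu> f\<bar> | f :: 'a \<Rightarrow> real. 1-lipschitz_on UNIV f}"

text \<open>Push-forward along the inclusion e of a subspace into the whole space.\<close>
definition incl_push :: "'a::topological_space measure \<Rightarrow> 'a measure" where
  "incl_push \<nu> = distr \<nu> borel (\<lambda>x. x)"

definition eps_net :: "real \<Rightarrow> 'a::metric_space set \<Rightarrow> bool" where
  "eps_net \<epsilon> Xh \<longleftrightarrow> Xh \<subseteq> UNIV \<and> (\<forall>x. \<exists>y\<in>Xh. dist x y \<le> \<epsilon>)"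

definition proper_set :: "'a::metric_space set \<Rightarrow> bool" where
  "proper_set Xh \<longleftrightarrow> (\<forall>D. bounded D \<longrightarrow> finite (D \<inter> Xh))"

definition eps_projection :: "real \<Rightarrow> 'a::metric_space set \<Rightarrow> ('a \<Rightarrow> 'a) \<Rightarrow> bool" where
  "eps_projection \<epsilon> Xh r \<longleftrightarrow> range r \<subseteq> Xh \<and> (\<forall>x\<in>Xh. r x = x) \<and> (\<forall>x. dist x (r x) \<le> \<epsilon>)"

end

theory Submission
  imports Defs
begin
lemma markov_basic:
  fixes g :: "nat \<Rightarrow> 'a \<Rightarrow> 'a"
  assumes g: "\<And>j. j < L \<Longrightarrow> g j \<in> measurable M M"
  shows "sets (markov_op L p g M) = sets M" "space (markov_op L p g M) = space M"
    "A \<in> sets M \<Longrightarrow> emeasure (markov_op L p g M) A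
        = (\<Sum>j<L. ennreal (p j) * emeasure (distr M M (g j)) A)"
proof -
  show "sets (markov_op L p g M) = sets M"
    unfolding markov_op_def by (simp add: sets.space_closed sets.sigma_sets_eq)
  show "space (markov_op L p g M) = space M"
    unfolding markov_op_def by (simp add: space_measure_of_conv)
  assume A: "A \<in> sets M"
  let ?mu = "\<lambda>A. \<Sum>j<L. ennreal (p j) * emeasure (distr M M (g j)) A"
  have "positive (sets M) ?mu" by (simp add: positive_def)
  moreover have "countably_additive (sets M) ?mu"
  proof (rule countably_additiveI)
    fix B :: "nat \<Rightarrow> 'a set" assume B: "range B \<subseteq> sets M" "disjoint_family B" "\<Union> (range B) \<in> sets M"
    have "(\<Sum>i. ?mu (B i)) = (\<Sum>j<L. \<Sum>i. ennreal (p j) * emeasure (distr M M (g j)) (B i))"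
      by (rule suminf_sum) (rule summableI)
    also have "\<dots> = ?mu (\<Union> (range B))"
    proof (rule sum.cong[OF refl])
      fix j assume "j \<in> {..<L}"
      have "(\<Sum>i. emeasure (distr M M (g j)) (B i)) = emeasure (distr M M (g j)) (\<Union> (range B))"
        by (rule suminf_emeasure) (use B in auto)
      then show "(\<Sum>i. ennreal (p j) * emeasure (distr M M (g j)) (B i)) = ennreal (p j) * emeasure (distr M M (g j)) (\<Union> (range B))"
        by simp
    qed
    finally show "(\<Sum>i. ?mu (B i)) = ?mu (\<Union> (range B))" .
  qed
  ultimately show "emeasure (markov_op L p g M) A = ?mu A"
    unfolding markov_op_def
    by (intro emeasure_measure_of_sigma[OF sets.sigma_algebra_axioms _ _ A])
qed

lemma markov_nn_distr:
  fixes g :: "nat \<Rightarrow> 'a \<Rightarrow> 'a"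
  assumes g: "\<And>j. j < L \<Longrightarrow> g j \<in> measurable M M"
    and h: "h \<in> borel_measurable M"
  shows "integral\<^sup>N (markov_op L p g M) h = (\<Sum>j<L. ennreal (p j) * integral\<^sup>N (distr M M (g j)) h)"
proof -
  note mb = markov_basic[OF g]
  have bm: "f \<in> borel_measurable (markov_op L p g M)" if "f \<in> borel_measurable M" for f :: "'a \<Rightarrow> ennreal"
    by (simp only: measurable_cong_sets[OF mb(1) refl] that)
  have bd: "f \<in> borel_measurable (distr M M (g j))" if "f \<in> borel_measurable M" for f :: "'a \<Rightarrow> ennreal" and j
    by (simp only: measurable_cong_sets[OF sets_distr refl] that)
  show ?thesis
    using h
  proof induction
    case (cong f h)
    have "integral\<^sup>N (markov_op L p g M) f = integral\<^sup>N (markov_op L p g M) h"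
      by (rule nn_integral_cong) (simp add: cong(3) mb(2))
    moreover have "integral\<^sup>N (distr M M (g j)) f = integral\<^sup>N (distr M M (g j)) h" for j
      by (rule nn_integral_cong) (simp add: cong(3))
    ultimately show ?case using cong(4) by simp
  next
    case (set A)
    then show ?case using mb
      by (simp add: nn_integral_indicator)
  next
    case (mult u c)
    have 1: "integral\<^sup>N (markov_op L p g M) (\<lambda>x. c * u x) = c * integral\<^sup>N (markov_op L p g M) u"
      by (rule nn_integral_cmult[OF bm[OF mult(2)]])
    have 2: "integral\<^sup>N (distr M M (g j)) (\<lambda>x. c * u x) = c * integral\<^sup>N (distr M M (g j)) u" for j
      by (rule nn_integral_cmult[OF bd[OF mult(2)]])
    show ?case unfolding 1 2 mult(4) sum_distrib_left
      by (rule sum.cong[OF refl]) (simp only: mult.left_commute)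
  next
    case (add u v)
    have 1: "integral\<^sup>N (markov_op L p g M) (\<lambda>x. v x + u x) = integral\<^sup>N (markov_op L p g M) v + integral\<^sup>N (markov_op L p g M) u"
      by (rule nn_integral_add[OF bm[OF \<open>v \<in> borel_measurable M\<close>] bm[OF \<open>u \<in> borel_measurable M\<close>]])
    have 2: "integral\<^sup>N (distr M M (g j)) (\<lambda>x. v x + u x) = integral\<^sup>N (distr M M (g j)) v + integral\<^sup>N (distr M M (g j)) u" for j
      by (rule nn_integral_add[OF bd[OF \<open>v \<in> borel_measurable M\<close>] bd[OF \<open>u \<in> borel_measurable M\<close>]])
    show ?case unfolding 1 2 distrib_left sum.distrib by (simp only: add.IH)
  next
    case (seq U)
    have inc: "incseq (\<lambda>i. ennreal (p j) * integral\<^sup>N (distr M M (g j)) (U i))" for j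
      using \<open>incseq U\<close> unfolding incseq_def
      by (auto intro!: mult_left_mono nn_integral_mono simp: le_fun_def)
    have "integral\<^sup>N (markov_op L p g M) (Sup (range U)) = (SUP i. integral\<^sup>N (markov_op L p g M) (U i))"
      using nn_integral_monotone_convergence_SUP[OF \<open>incseq U\<close> bm[OF seq(1)]] by (simp add: SUP_apply[abs_def])
    also have "\<dots> = (SUP i. \<Sum>j<L. ennreal (p j) * integral\<^sup>N (distr M M (g j)) (U i))"
      using seq.IH by simp
    also have "\<dots> = (\<Sum>j<L. SUP i. ennreal (p j) * integral\<^sup>N (distr M M (g j)) (U i))"
      by (rule ennreal_SUP_sum) (rule inc)
    also have "\<dots> = (\<Sum>j<L. ennreal (p j) * integral\<^sup>N (distr M M (g j)) (Sup (range U)))"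
    proof (rule sum.cong[OF refl])
      fix j
      have "integral\<^sup>N (distr M M (g j)) (Sup (range U)) = (SUP i. integral\<^sup>N (distr M M (g j)) (U i))"
        using nn_integral_monotone_convergence_SUP[OF \<open>incseq U\<close> bd[OF seq(1)]]
        by (simp add: SUP_apply[abs_def])
      then show "(SUP i. ennreal (p j) * integral\<^sup>N (distr M M (g j)) (U i)) = ennreal (p j) * integral\<^sup>N (distr M M (g j)) (Sup (range U))"
        by (simp add: SUP_mult_left_ennreal)
    qed
    finally show ?case .
  qed
qed

lemma ennreal_cmult_less_top: "X < top \<Longrightarrow> ennreal c * X < top"
  by (simp add: ennreal_mult_less_top)

lemma ennreal_sum_cmult_less_top:
  "(\<And>j. j < (L::nat) \<Longrightarrow> X j < top) \<Longrightarrow> (\<Sum>j<L. ennreal (c j) * X j) < top"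
proof -
  assume a: "\<And>j. j < L \<Longrightarrow> X j < top"
  have "\<forall>j\<in>{..<L}. ennreal (c j) * X j < top" using a ennreal_cmult_less_top by blast
  then show ?thesis by (intro ennreal_sum_less_top[THEN iffD2]) auto
qed

lemma markov_nn':
  fixes g :: "nat \<Rightarrow> 'a \<Rightarrow> 'a" and h :: "'a \<Rightarrow> real"
  assumes g: "\<And>j. j < L \<Longrightarrow> g j \<in> measurable M M"
    and h: "h \<in> borel_measurable M"
  shows "(\<integral>\<^sup>+x. ennreal (h x) \<partial>markov_op L p g M) = (\<Sum>j<L. ennreal (p j) * (\<integral>\<^sup>+x. ennreal (h (g j x)) \<partial>M))"
proof -
  have hm: "(\<lambda>x. ennreal (h x)) \<in> borel_measurable M" using h by simp
  have "(\<integral>\<^sup>+x. ennreal (h x) \<partial>markov_op L p g M) = (\<Sum>j<L. ennreal (p j) * integral\<^sup>N (distr M M (g j)) (\<lambda>x. ennreal (h x)))"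
    by (rule markov_nn_distr[OF g hm])
  also have "\<dots> = (\<Sum>j<L. ennreal (p j) * (\<integral>\<^sup>+x. ennreal (h (g j x)) \<partial>M))"
    by (intro sum.cong refl) (simp add: nn_integral_distr g hm)
  finally show ?thesis .
qed

lemma markov_integrable:
  fixes g :: "nat \<Rightarrow> 'a \<Rightarrow> 'a" and f :: "'a \<Rightarrow> real"
  assumes g: "\<And>j. j < L \<Longrightarrow> g j \<in> measurable M M"
    and f: "f \<in> borel_measurable M"
    and ints: "\<And>j. j < L \<Longrightarrow> integrable M (\<lambda>x. f (g j x))"
  shows "integrable (markov_op L p g M) f"
proof -
  note mb = markov_basic[OF g]
  have fN: "f \<in> borel_measurable (markov_op L p g M)"
    by (simp only: measurable_cong_sets[OF mb(1) refl] f)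
  have nf: "(\<lambda>x. norm (f x)) \<in> borel_measurable M" using f by simp
  have fin: "(\<integral>\<^sup>+x. ennreal (norm (f (g j x))) \<partial>M) < top" if "j < L" for j
    using ints[OF that] unfolding integrable_iff_bounded by simp
  have "(\<integral>\<^sup>+x. ennreal (norm (f x)) \<partial>markov_op L p g M) < \<infinity>"
    using markov_nn'[OF g nf, where p=p] ennreal_sum_cmult_less_top[of L "\<lambda>j. (\<integral>\<^sup>+x. ennreal (norm (f (g j x))) \<partial>M)" p, OF fin]
    by (simp add: infinity_ennreal_def del: real_norm_def)
  then show ?thesis using fN unfolding integrable_iff_bounded by simp
qed

lemma markov_integral_nonneg:
  fixes g :: "nat \<Rightarrow> 'a \<Rightarrow> 'a" and f :: "'a \<Rightarrow> real"
  assumes g: "\<And>j. j < L \<Longrightarrow> g j \<in> measurable M M"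
    and p: "\<And>j. j < L \<Longrightarrow> 0 \<le> p j"
    and f: "f \<in> borel_measurable M" and nn: "\<And>x. 0 \<le> f x"
    and ints: "\<And>j. j < L \<Longrightarrow> integrable M (\<lambda>x. f (g j x))"
  shows "integral\<^sup>L (markov_op L p g M) f = (\<Sum>j<L. p j * integral\<^sup>L M (\<lambda>x. f (g j x)))"
proof -
  note mb = markov_basic[OF g]
  have fN: "f \<in> borel_measurable (markov_op L p g M)"
    by (simp only: measurable_cong_sets[OF mb(1) refl] f)
  have fin: "(\<integral>\<^sup>+x. ennreal (f (g j x)) \<partial>M) < top" if "j < L" for j
    using ints[OF that] nn unfolding integrable_iff_bounded by simp
  have fgm: "(\<lambda>x. f (g j x)) \<in> borel_measurable M" if "j < L" for j
    using ints[OF that] by simp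
  have "integral\<^sup>L (markov_op L p g M) f = enn2real (\<integral>\<^sup>+x. ennreal (f x) \<partial>markov_op L p g M)"
    by (rule integral_eq_nn_integral[OF fN]) (simp add: nn)
  also have "\<dots> = enn2real (\<Sum>j<L. ennreal (p j) * (\<integral>\<^sup>+x. ennreal (f (g j x)) \<partial>M))"
    by (simp only: markov_nn'[OF g f])
  also have "\<dots> = (\<Sum>j<L. enn2real (ennreal (p j) * (\<integral>\<^sup>+x. ennreal (f (g j x)) \<partial>M)))"
    by (subst enn2real_sum) (simp_all add: ennreal_cmult_less_top fin)
  also have "\<dots> = (\<Sum>j<L. p j * integral\<^sup>L M (\<lambda>x. f (g j x)))"
  proof (rule sum.cong[OF refl])
    fix j assume j: "j \<in> {..<L}"
    have "integral\<^sup>L M (\<lambda>x. f (g j x)) = enn2real (\<integral>\<^sup>+x. ennreal (f (g j x)) \<partial>M)"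
      by (rule integral_eq_nn_integral) (use fgm j nn in auto)
    then show "enn2real (ennreal (p j) * (\<integral>\<^sup>+x. ennreal (f (g j x)) \<partial>M)) = p j * integral\<^sup>L M (\<lambda>x. f (g j x))"
      using p j by (simp add: enn2real_mult)
  qed
  finally show ?thesis .
qed

lemma markov_integral:
  fixes g :: "nat \<Rightarrow> 'a \<Rightarrow> 'a" and f :: "'a \<Rightarrow> real"
  assumes g: "\<And>j. j < L \<Longrightarrow> g j \<in> measurable M M"
    and p: "\<And>j. j < L \<Longrightarrow> 0 \<le> p j"
    and f: "f \<in> borel_measurable M"
    and ints: "\<And>j. j < L \<Longrightarrow> integrable M (\<lambda>x. f (g j x))"
  shows "integral\<^sup>L (markov_op L p g M) f = (\<Sum>j<L. p j * integral\<^sup>L M (\<lambda>x. f (g j x)))"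
proof -
  define fp where "fp = (\<lambda>x. max (f x) 0)"
  define fn where "fn = (\<lambda>x. max (- f x) 0)"
  have fpm: "fp \<in> borel_measurable M" "fn \<in> borel_measurable M" using f unfolding fp_def fn_def by auto
  have ip: "integrable M (\<lambda>x. fp (g j x))" "integrable M (\<lambda>x. fn (g j x))" if "j < L" for j
    using ints[OF that] unfolding fp_def fn_def by auto
  have eq: "f x = fp x - fn x" for x unfolding fp_def fn_def by auto
  have eqf: "f = (\<lambda>x. fp x - fn x)" using eq by (rule ext)
  have "integral\<^sup>L (markov_op L p g M) f = integral\<^sup>L (markov_op L p g M) (\<lambda>x. fp x - fn x)"
    by (subst eqf) (rule refl)
  also have "\<dots> = integral\<^sup>L (markov_op L p g M) fp - integral\<^sup>L (markov_op L p g M) fn"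
    by (rule Bochner_Integration.integral_diff[OF markov_integrable[OF g fpm(1) ip(1)] markov_integrable[OF g fpm(2) ip(2)]])
  also have "\<dots> = (\<Sum>j<L. p j * integral\<^sup>L M (\<lambda>x. fp (g j x))) - (\<Sum>j<L. p j * integral\<^sup>L M (\<lambda>x. fn (g j x)))"
    using markov_integral_nonneg[OF g p fpm(1) _ ip(1)] markov_integral_nonneg[OF g p fpm(2) _ ip(2)]
    unfolding fp_def fn_def by simp
  also have "\<dots> = (\<Sum>j<L. p j * integral\<^sup>L M (\<lambda>x. f (g j x)))"
    unfolding sum_subtractf[symmetric]
  proof (rule sum.cong[OF refl])
    fix j assume j: "j \<in> {..<L}"
    have "integral\<^sup>L M (\<lambda>x. f (g j x)) = integral\<^sup>L M (\<lambda>x. fp (g j x) - fn (g j x))"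
      by (simp only: eq)
    also have "\<dots> = integral\<^sup>L M (\<lambda>x. fp (g j x)) - integral\<^sup>L M (\<lambda>x. fn (g j x))"
      by (rule Bochner_Integration.integral_diff) (use ip j in auto)
    finally show "p j * integral\<^sup>L M (\<lambda>x. fp (g j x)) - p j * integral\<^sup>L M (\<lambda>x. fn (g j x)) = p j * integral\<^sup>L M (\<lambda>x. f (g j x))"
      by (simp add: right_diff_distrib)
  qed
  finally show ?thesis .
qed

lemma int_bounds:
  fixes f :: "'a \<Rightarrow> real"
  assumes P: "prob_space M" and K: "K \<in> sets M" "emeasure M K = 1" and i: "integrable M f"
    and b: "\<And>x. x \<in> K \<Longrightarrow> a \<le> f x \<and> f x \<le> b"
  shows "a \<le> integral\<^sup>L M f \<and> integral\<^sup>L M f \<le> b"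
proof -
  interpret prob_space M by fact
  have "prob K = 1" using K by (simp add: measure_def)
  then have ae: "AE x in M. x \<in> K" by (rule AE_prob_1)
  have "integral\<^sup>L M (\<lambda>x. a) \<le> integral\<^sup>L M f"
    by (rule integral_mono_AE) (use ae b i in auto)
  moreover have "integral\<^sup>L M f \<le> integral\<^sup>L M (\<lambda>x. b)"
    by (rule integral_mono_AE) (use ae b i in auto)
  ultimately show ?thesis by (simp add: prob_space)
qed

lemma integrable_on_K:
  fixes f :: "'a \<Rightarrow> real"
  assumes P: "prob_space M" and K: "K \<in> sets M" "emeasure M K = 1"
    and f: "f \<in> borel_measurable M" and b: "\<And>x. x \<in> K \<Longrightarrow> \<bar>f x\<bar> \<le> B"
  shows "integrable M f"
proof -
  interpret prob_space M by fact
  have "prob K = 1" using K by (simp add: measure_def)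
  then have ae: "AE x in M. x \<in> K" by (rule AE_prob_1)
  have "AE x in M. norm (f x) \<le> B" using ae b by auto
  then show ?thesis using f by (rule integrable_const_bound)
qed

lemma lip_borel: "C-lipschitz_on UNIV f \<Longrightarrow> f \<in> borel_measurable borel"
  by (intro borel_measurable_continuous_onI lipschitz_on_continuous_on)

definition goodB :: "'a::metric_space measure \<Rightarrow> bool" where
  "goodB \<mu> \<longleftrightarrow> prob_space \<mu> \<and> sets \<mu> = sets borel \<and> (\<exists>K. compact K \<and> emeasure \<mu> K = 1)"

lemma goodB_integrable:
  fixes f :: "'a::metric_space \<Rightarrow> real"
  assumes g: "goodB \<mu>" and f: "C-lipschitz_on UNIV f"
  shows "integrable \<mu> f"
proof -
  obtain K where K: "compact K" "emeasure \<mu> K = 1" and P: "prob_space \<mu>" and s: "sets \<mu> = sets borel"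
    using g unfolding goodB_def by auto
  have Ks: "K \<in> sets \<mu>" using K s by (simp add: borel_closed compact_imp_closed)
  have fm: "f \<in> borel_measurable \<mu>"
    using lip_borel[OF f] by (simp only: measurable_cong_sets[OF s refl])
  have "compact (f ` K)"
    by (rule compact_continuous_image[OF continuous_on_subset[OF lipschitz_on_continuous_on[OF f]] K(1)]) auto
  then obtain B where "\<forall>y\<in>f ` K. norm y \<le> B" using compact_imp_bounded bounded_iff by metis
  then have "\<And>x. x \<in> K \<Longrightarrow> \<bar>f x\<bar> \<le> B" by auto
  then show ?thesis by (rule integrable_on_K[OF P Ks K(2) fm])
qed

lemma lip1_zero: "1-lipschitz_on UNIV (\<lambda>x. 0::real)"
  by (rule lipschitz_on_le[OF lipschitz_on_constant]) simp

lemma dMK_least: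
  assumes "\<And>f::'a::metric_space \<Rightarrow> real. 1-lipschitz_on UNIV f \<Longrightarrow> \<bar>integral\<^sup>L \<mu> f - integral\<^sup>L \<nu> f\<bar> \<le> c"
  shows "d_MK \<mu> \<nu> \<le> c"
  unfolding d_MK_def
  by (rule cSup_least) (use assms lip1_zero in auto)

lemma goodB_bound:
  fixes a :: "'a::metric_space"
  assumes g: "goodB \<mu>"
  obtains b :: real where "\<And>f :: 'a \<Rightarrow> real. 1-lipschitz_on UNIV f \<Longrightarrow> f a - b \<le> integral\<^sup>L \<mu> f \<and> integral\<^sup>L \<mu> f \<le> f a + b"
proof -
  obtain K where K: "compact K" "emeasure \<mu> K = 1" and P: "prob_space \<mu>" and s: "sets \<mu> = sets borel"
    using g unfolding goodB_def by auto
  have Ks: "K \<in> sets \<mu>" using K s by (simp add: borel_closed compact_imp_closed)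
  obtain b where b: "\<forall>y\<in>K. dist a y \<le> b" using compact_imp_bounded[OF K(1)] bounded_any_center by metis
  have main: "f a - b \<le> integral\<^sup>L \<mu> f \<and> integral\<^sup>L \<mu> f \<le> f a + b" if f: "1-lipschitz_on UNIV f" for f :: "'a \<Rightarrow> real"
  proof -
    have "\<bar>f x - f a\<bar> \<le> b" if "x \<in> K" for x
    proof -
      have "dist (f x) (f a) \<le> 1 * dist x a" by (rule lipschitz_onD[OF f]) auto
      moreover have "dist x a \<le> b" using b that by (metis dist_commute)
      ultimately show ?thesis by (metis dist_real_def mult_1 order_trans)
    qed
    then have bnd: "\<And>x. x \<in> K \<Longrightarrow> f a - b \<le> f x \<and> f x \<le> f a + b" by (simp add: abs_le_iff) (metis diff_le_eq add.commute)
    from int_bounds[OF P Ks K(2) goodB_integrable[OF g f] bnd]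
    show ?thesis .
  qed
  show ?thesis by (rule that[OF main])
qed

lemma dMK_upper:
  fixes f :: "'a::metric_space \<Rightarrow> real"
  assumes g1: "goodB \<mu>" and g2: "goodB \<nu>" and f: "1-lipschitz_on UNIV f"
  shows "\<bar>integral\<^sup>L \<mu> f - integral\<^sup>L \<nu> f\<bar> \<le> d_MK \<mu> \<nu>"
proof -
  obtain b1 :: real where b1: "\<And>f :: 'a \<Rightarrow> real. 1-lipschitz_on UNIV f \<Longrightarrow> f undefined - b1 \<le> integral\<^sup>L \<mu> f \<and> integral\<^sup>L \<mu> f \<le> f undefined + b1"
    using goodB_bound[OF g1] by metis
  obtain b2 :: real where b2: "\<And>f :: 'a \<Rightarrow> real. 1-lipschitz_on UNIV f \<Longrightarrow> f undefined - b2 \<le> integral\<^sup>L \<nu> f \<and> integral\<^sup>L \<nu> f \<le> f undefined + b2"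
    using goodB_bound[OF g2] by metis
  have bdd: "bdd_above {\<bar>integral\<^sup>L \<mu> f - integral\<^sup>L \<nu> f\<bar> | f :: 'a \<Rightarrow> real. 1-lipschitz_on UNIV f}"
  proof (rule bdd_aboveI)
    fix x assume "x \<in> {\<bar>integral\<^sup>L \<mu> f - integral\<^sup>L \<nu> f\<bar> | f :: 'a \<Rightarrow> real. 1-lipschitz_on UNIV f}"
    then obtain f :: "'a \<Rightarrow> real" where f: "1-lipschitz_on UNIV f" and x: "x = \<bar>integral\<^sup>L \<mu> f - integral\<^sup>L \<nu> f\<bar>" by blast
    show "x \<le> b1 + b2" using b1[OF f] b2[OF f] unfolding x by linarith
  qed
  show ?thesis unfolding d_MK_def
    by (rule cSup_upper[OF _ bdd]) (use f in blast)
qed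

lemma dMK_nonneg:
  assumes "goodB \<mu>" "goodB \<nu>" shows "0 \<le> d_MK \<mu> \<nu>"
  using dMK_upper[OF assms lip1_zero] by simp

lemma lip_const_facts:
  fixes f :: "'a::metric_space \<Rightarrow> 'a"
  assumes "banach_contraction f"
  shows "0 \<le> lip_const f" "lip_const f < 1" "(lip_const f)-lipschitz_on UNIV f"
proof -
  define S where "S = {C. 0 \<le> C \<and> C-lipschitz_on UNIV f}"
  obtain C where C: "C < 1" "C-lipschitz_on UNIV f" using assms unfolding banach_contraction_def by auto
  have CS: "C \<in> S" using C lipschitz_on_nonneg unfolding S_def by blast
  have bdd: "bdd_below S" unfolding S_def by (rule bdd_belowI[of _ 0]) auto
  have ne: "S \<noteq> {}" using CS by auto
  have l: "lip_const f = Inf S" unfolding lip_const_def S_def ..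
  show "0 \<le> lip_const f" unfolding l by (rule cInf_greatest[OF ne]) (auto simp: S_def)
  show "lip_const f < 1" unfolding l using cInf_lower[OF CS bdd] C(1) by linarith
  show "(lip_const f)-lipschitz_on UNIV f"
  proof (rule lipschitz_onI)
    show "0 \<le> lip_const f" unfolding l by (rule cInf_greatest[OF ne]) (auto simp: S_def)
    fix x y :: 'a
    show "dist (f x) (f y) \<le> lip_const f * dist x y"
    proof (cases "x = y")
      case True then show ?thesis by simp
    next
      case False
      then have d: "dist x y > 0" by simp
      have "dist (f x) (f y) / dist x y \<le> Inf S"
      proof (rule cInf_greatest[OF ne])
        fix c assume "c \<in> S"
        then have "dist (f x) (f y) \<le> c * dist x y" unfolding S_def by (auto intro: lipschitz_onD)
        then show "dist (f x) (f y) / dist x y \<le> c" using d by (simp add: divide_le_eq)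
      qed
      then show ?thesis unfolding l using d by (simp add: divide_le_eq)
    qed
  qed
qed

definition goodX :: "'a::metric_space set \<Rightarrow> 'a measure \<Rightarrow> bool" where
  "goodX Xh \<mu> \<longleftrightarrow> sets \<mu> = sets (restrict_space borel Xh) \<and> space \<mu> = Xh \<and> prob_space \<mu>
     \<and> (\<exists>K. finite K \<and> K \<subseteq> Xh \<and> emeasure \<mu> K = 1)"

lemma finite_in_restrict:
  fixes K :: "'a::metric_space set"
  assumes "finite K" "K \<subseteq> Xh" shows "K \<in> sets (restrict_space borel Xh)"
proof -
  have "K \<in> sets borel" using assms by (simp add: borel_closed finite_imp_closed)
  moreover have "K = Xh \<inter> K" using assms by auto
  ultimately show ?thesis unfolding sets_restrict_space by blast
qed

lemma goodX_meas:
  fixes g :: "'a::metric_space \<Rightarrow> 'a"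
  assumes "goodX Xh \<mu>" "g \<in> borel_measurable borel" "range g \<subseteq> Xh"
  shows "g \<in> measurable \<mu> \<mu>"
proof -
  have s: "sets \<mu> = sets (restrict_space borel Xh)" using assms unfolding goodX_def by auto
  have "g \<in> measurable (restrict_space borel Xh) (restrict_space borel Xh)"
    by (rule measurable_restrict_space2) (use assms measurable_restrict_space1 in auto)
  then show ?thesis by (simp only: measurable_cong_sets[OF s s])
qed

lemma goodX_fmeas:
  fixes f :: "'a::metric_space \<Rightarrow> real"
  assumes "goodX Xh \<mu>" "f \<in> borel_measurable borel"
  shows "f \<in> borel_measurable \<mu>"
proof -
  have s: "sets \<mu> = sets (restrict_space borel Xh)" using assms unfolding goodX_def by auto
  have "f \<in> borel_measurable (restrict_space borel Xh)"
    by (rule measurable_restrict_space1) (rule assms(2))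
  then show ?thesis by (simp only: measurable_cong_sets[OF s refl])
qed

lemma sum_p_one:
  assumes "\<And>j. j < L \<Longrightarrow> a j = 1" "\<And>j. j < (L::nat) \<Longrightarrow> 0 \<le> p j" "(\<Sum>j<L. p j) = 1"
  shows "(\<Sum>j<L. ennreal (p j) * a j) = 1"
proof -
  have "(\<Sum>j<L. ennreal (p j) * a j) = (\<Sum>j<L. ennreal (p j))"
    by (rule sum.cong) (auto simp: assms(1))
  also have "\<dots> = ennreal (\<Sum>j<L. p j)" using assms(2) by (subst sum_ennreal) auto
  finally show ?thesis using assms(3) by simp
qed

lemma goodX_step:
  fixes g :: "nat \<Rightarrow> 'a::metric_space \<Rightarrow> 'a"
  assumes gx: "goodX Xh \<mu>" and gm: "\<And>j. j < L \<Longrightarrow> g j \<in> borel_measurable borel"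
    and gr: "\<And>j. j < L \<Longrightarrow> range (g j) \<subseteq> Xh"
    and p: "\<And>j. j < L \<Longrightarrow> 0 \<le> p j" "(\<Sum>j<L. p j) = 1"
  shows "goodX Xh (markov_op L p g \<mu>)"
proof -
  have g: "\<And>j. j < L \<Longrightarrow> g j \<in> measurable \<mu> \<mu>" using goodX_meas[OF gx] gm gr by blast
  have mb1: "sets (markov_op L p g \<mu>) = sets \<mu>" by (rule markov_basic(1)) (simp add: g)
  have mb2: "space (markov_op L p g \<mu>) = space \<mu>" by (rule markov_basic(2)) (simp add: g)
  have mb3: "emeasure (markov_op L p g \<mu>) A = (\<Sum>j<L. ennreal (p j) * emeasure (distr \<mu> \<mu> (g j)) A)" if "A \<in> sets \<mu>" for A
    by (rule markov_basic(3)[OF _ that]) (simp add: g)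
  have s: "sets \<mu> = sets (restrict_space borel Xh)" and sp: "space \<mu> = Xh" and P: "prob_space \<mu>"
    using gx unfolding goodX_def by auto
  obtain K where K: "finite K" "K \<subseteq> Xh" "emeasure \<mu> K = 1" using gx unfolding goodX_def by auto
  define K' where "K' = (\<Union>j<L. g j ` K)"
  have K'f: "finite K'" unfolding K'_def using K(1) by auto
  have K'X: "K' \<subseteq> Xh" unfolding K'_def using gr by auto
  have K's: "K' \<in> sets \<mu>" unfolding s by (rule finite_in_restrict[OF K'f K'X])
  have Ks: "K \<in> sets \<mu>" unfolding s by (rule finite_in_restrict[OF K(1,2)])
  have "emeasure (markov_op L p g \<mu>) K' = (\<Sum>j<L. ennreal (p j) * emeasure (distr \<mu> \<mu> (g j)) K')"
    by (rule mb3[OF K's])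
  also have "\<dots> = 1"
  proof (rule sum_p_one[OF _ p])
    fix j assume j: "j < L"
    have e: "emeasure (distr \<mu> \<mu> (g j)) K' = emeasure \<mu> (g j -` K' \<inter> space \<mu>)"
      by (rule emeasure_distr[OF g[OF j] K's])
    have sub: "K \<subseteq> g j -` K' \<inter> space \<mu>" using K(2) j sp unfolding K'_def by auto
    have pre: "g j -` K' \<inter> space \<mu> \<in> sets \<mu>" using g[OF j] K's by (rule measurable_sets)
    have "1 \<le> emeasure \<mu> (g j -` K' \<inter> space \<mu>)"
      using emeasure_mono[OF sub pre] K(3) by simp
    moreover have "emeasure \<mu> (g j -` K' \<inter> space \<mu>) \<le> 1" using prob_space.emeasure_le_1[OF P] .
    ultimately show "emeasure (distr \<mu> \<mu> (g j)) K' = 1" unfolding e by (rule antisym[rotated])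
  qed
  finally have eK: "emeasure (markov_op L p g \<mu>) K' = 1" .
  have "emeasure (markov_op L p g \<mu>) (space (markov_op L p g \<mu>)) = (\<Sum>j<L. ennreal (p j) * emeasure (distr \<mu> \<mu> (g j)) (space \<mu>))"
    unfolding mb2 by (rule mb3[OF sets.top])
  also have "\<dots> = 1"
  proof (rule sum_p_one[OF _ p])
    fix j assume j: "j < L"
    have "prob_space (distr \<mu> \<mu> (g j))" by (rule prob_space.prob_space_distr[OF P g[OF j]])
    then show "emeasure (distr \<mu> \<mu> (g j)) (space \<mu>) = 1"
      using prob_space.emeasure_space_1 by fastforce
  qed
  finally have "prob_space (markov_op L p g \<mu>)" by (rule prob_spaceI)
  then show ?thesis unfolding goodX_def using mb1 mb2 s sp K'f K'X eK by auto
qed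

lemma goodX_push:
  fixes \<mu> :: "'a::metric_space measure"
  assumes gx: "goodX Xh \<mu>"
  shows "goodB (incl_push \<mu>)"
    "\<And>f::'a \<Rightarrow> real. f \<in> borel_measurable borel \<Longrightarrow> integral\<^sup>L (incl_push \<mu>) f = integral\<^sup>L \<mu> f"
proof -
  have s: "sets \<mu> = sets (restrict_space borel Xh)" and sp: "space \<mu> = Xh" and P: "prob_space \<mu>"
    using gx unfolding goodX_def by auto
  obtain K where K: "finite K" "K \<subseteq> Xh" "emeasure \<mu> K = 1" using gx unfolding goodX_def by auto
  have idm: "(\<lambda>x. x) \<in> measurable \<mu> borel"
  proof -
    have "(\<lambda>x. x) \<in> measurable (restrict_space borel Xh) borel"
      by (rule measurable_restrict_space1) simp
    then show ?thesis by (simp only: measurable_cong_sets[OF s refl])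
  qed
  have Kb: "K \<in> sets borel" using K by (simp add: borel_closed finite_imp_closed)
  have "emeasure (incl_push \<mu>) K = emeasure \<mu> ((\<lambda>x. x) -` K \<inter> space \<mu>)"
    unfolding incl_push_def by (rule emeasure_distr[OF idm Kb])
  also have "(\<lambda>x. x) -` K \<inter> space \<mu> = K" using K sp by auto
  finally have eK: "emeasure (incl_push \<mu>) K = 1" using K by simp
  have "prob_space (incl_push \<mu>)" unfolding incl_push_def by (rule prob_space.prob_space_distr[OF P idm])
  then show "goodB (incl_push \<mu>)" unfolding goodB_def using eK K(1) finite_imp_compact
    by (auto simp: incl_push_def)
  fix f :: "'a \<Rightarrow> real" assume f: "f \<in> borel_measurable borel"
  show "integral\<^sup>L (incl_push \<mu>) f = integral\<^sup>L \<mu> f"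
    unfolding incl_push_def by (simp add: integral_distr[OF idm f])
qed

lemma goodX_integrable:
  fixes h :: "'a::metric_space \<Rightarrow> real"
  assumes gx: "goodX Xh \<mu>" and h: "h \<in> borel_measurable \<mu>"
  shows "integrable \<mu> h"
proof -
  have s: "sets \<mu> = sets (restrict_space borel Xh)" and P: "prob_space \<mu>"
    using gx unfolding goodX_def by auto
  obtain K where K: "finite K" "K \<subseteq> Xh" "emeasure \<mu> K = 1" using gx unfolding goodX_def by auto
  have Ks: "K \<in> sets \<mu>" unfolding s by (rule finite_in_restrict[OF K(1,2)])
  have "\<bar>h x\<bar> \<le> (\<Sum>y\<in>K. \<bar>h y\<bar>)" if "x \<in> K" for x
    by (rule member_le_sum[OF that _ K(1)]) simp
  then show ?thesis by (rule integrable_on_K[OF P Ks K(3) h])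
qed

lemma lip_comp:
  fixes f :: "'a::metric_space \<Rightarrow> real" and \<phi> :: "'a \<Rightarrow> 'a"
  assumes f: "1-lipschitz_on UNIV f" and \<phi>: "\<alpha>-lipschitz_on UNIV \<phi>"
  shows "\<alpha>-lipschitz_on UNIV (\<lambda>x. f (\<phi> x))"
proof (rule lipschitz_onI)
  show "0 \<le> \<alpha>" using \<phi> by (rule lipschitz_on_nonneg)
  fix x y :: 'a
  have "dist (f (\<phi> x)) (f (\<phi> y)) \<le> 1 * dist (\<phi> x) (\<phi> y)" by (rule lipschitz_onD[OF f]) auto
  also have "\<dots> \<le> \<alpha> * dist x y" using lipschitz_onD[OF \<phi>] by simp
  finally show "dist (f (\<phi> x)) (f (\<phi> y)) \<le> \<alpha> * dist x y" .
qed

lemma step: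
  fixes \<phi> :: "nat \<Rightarrow> 'a::metric_space \<Rightarrow> 'a" and f :: "'a \<Rightarrow> real"
  assumes gx: "goodX Xh \<mu>" and gS: "goodB \<mu>S"
    and p: "\<And>j. j < L \<Longrightarrow> 0 \<le> p j" and psum: "(\<Sum>j<L. p j) = 1"
    and lip: "\<And>j. j < L \<Longrightarrow> \<alpha>-lipschitz_on UNIV (\<phi> j)" and \<alpha>: "0 \<le> \<alpha>"
    and rm: "r \<in> borel_measurable borel" and rr: "range r \<subseteq> Xh" and rd: "\<And>x. dist x (r x) \<le> \<epsilon>"
    and fixp: "markov_op L p \<phi> \<mu>S = \<mu>S"
    and f: "1-lipschitz_on UNIV f"
  shows "\<bar>integral\<^sup>L (incl_push (markov_op L p (\<lambda>j. r \<circ> \<phi> j) \<mu>)) f - integral\<^sup>L \<mu>S f\<bar>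
           \<le> \<epsilon> + \<alpha> * d_MK (incl_push \<mu>) \<mu>S"
proof -
  define g where "g = (\<lambda>j. r \<circ> \<phi> j)"
  define D where "D = d_MK (incl_push \<mu>) \<mu>S"
  have \<phi>b: "\<phi> j \<in> borel_measurable borel" if "j < L" for j using lip[OF that] by (rule lip_borel)
  have gm: "\<And>j. j < L \<Longrightarrow> g j \<in> borel_measurable borel" unfolding g_def using \<phi>b rm by (auto intro: measurable_comp)
  have gr: "\<And>j. j < L \<Longrightarrow> range (g j) \<subseteq> Xh" unfolding g_def using rr by auto
  have gx': "goodX Xh (markov_op L p g \<mu>)" by (rule goodX_step[OF gx gm gr p psum])
  have fb: "f \<in> borel_measurable borel" using f by (rule lip_borel)
  have g\<mu>: "\<And>j. j < L \<Longrightarrow> g j \<in> measurable \<mu> \<mu>" using goodX_meas[OF gx] gm gr by blast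
  have f\<mu>: "f \<in> borel_measurable \<mu>" by (rule goodX_fmeas[OF gx fb])
  have fg\<mu>: "(\<lambda>x. f (g j x)) \<in> borel_measurable \<mu>" if "j < L" for j
    by (rule goodX_fmeas[OF gx]) (use fb gm[OF that] in \<open>auto intro: measurable_comp[where f="g j" and g=f, unfolded comp_def]\<close>)
  have f\<phi>\<mu>: "(\<lambda>x. f (\<phi> j x)) \<in> borel_measurable \<mu>" if "j < L" for j
    by (rule goodX_fmeas[OF gx]) (use fb \<phi>b[OF that] in \<open>auto intro: measurable_comp[where f="\<phi> j" and g=f, unfolded comp_def]\<close>)
  have I1: "integral\<^sup>L (incl_push (markov_op L p g \<mu>)) f = integral\<^sup>L (markov_op L p g \<mu>) f"
    by (rule goodX_push(2)[OF gx' fb])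
  have I2: "integral\<^sup>L (markov_op L p g \<mu>) f = (\<Sum>j<L. p j * integral\<^sup>L \<mu> (\<lambda>x. f (g j x)))"
    by (rule markov_integral[OF _ _ f\<mu>]) (simp_all add: g\<mu> p goodX_integrable[OF gx] fg\<mu>)
  have sS: "sets \<mu>S = sets borel" using gS unfolding goodB_def by auto
  have \<phi>S: "\<And>j. j < L \<Longrightarrow> \<phi> j \<in> measurable \<mu>S \<mu>S" using \<phi>b by (simp only: measurable_cong_sets[OF sS sS])
  have fS: "f \<in> borel_measurable \<mu>S" using fb by (simp only: measurable_cong_sets[OF sS refl])
  have intS: "integrable \<mu>S (\<lambda>x. f (\<phi> j x))" if "j < L" for j
    by (rule goodB_integrable[OF gS lip_comp[OF f lip[OF that]]])
  have I3: "integral\<^sup>L \<mu>S f = (\<Sum>j<L. p j * integral\<^sup>L \<mu>S (\<lambda>x. f (\<phi> j x)))"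
  proof -
    have "integral\<^sup>L \<mu>S f = integral\<^sup>L (markov_op L p \<phi> \<mu>S) f" using fixp by simp
    also have "\<dots> = (\<Sum>j<L. p j * integral\<^sup>L \<mu>S (\<lambda>x. f (\<phi> j x)))"
      by (rule markov_integral[OF _ _ fS]) (simp_all add: \<phi>S p intS)
    finally show ?thesis .
  qed
  have gE: "goodB (incl_push \<mu>)" by (rule goodX_push(1)[OF gx])
  have P: "prob_space \<mu>" using gx unfolding goodX_def by auto
  have PS: "prob_space \<mu>S" using gS unfolding goodB_def by auto
  have Dnn: "0 \<le> D" unfolding D_def by (rule dMK_nonneg[OF gE gS])
  have per: "\<bar>integral\<^sup>L \<mu> (\<lambda>x. f (g j x)) - integral\<^sup>L \<mu>S (\<lambda>x. f (\<phi> j x))\<bar> \<le> \<epsilon> + \<alpha> * D" if j: "j < L" for j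
  proof -
    have ia: "integrable \<mu> (\<lambda>x. f (g j x))" by (rule goodX_integrable[OF gx fg\<mu>[OF j]])
    have ib: "integrable \<mu> (\<lambda>x. f (\<phi> j x))" by (rule goodX_integrable[OF gx f\<phi>\<mu>[OF j]])
    have a: "\<bar>integral\<^sup>L \<mu> (\<lambda>x. f (g j x)) - integral\<^sup>L \<mu> (\<lambda>x. f (\<phi> j x))\<bar> \<le> \<epsilon>"
    proof -
      have b: "- \<epsilon> \<le> f (g j x) - f (\<phi> j x) \<and> f (g j x) - f (\<phi> j x) \<le> \<epsilon>" for x
      proof -
        have "dist (f (r (\<phi> j x))) (f (\<phi> j x)) \<le> 1 * dist (r (\<phi> j x)) (\<phi> j x)"
          by (rule lipschitz_onD[OF f]) auto
        moreover have "dist (r (\<phi> j x)) (\<phi> j x) \<le> \<epsilon>" using rd by (simp add: dist_commute)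
        ultimately have "\<bar>f (r (\<phi> j x)) - f (\<phi> j x)\<bar> \<le> \<epsilon>" by (simp add: dist_real_def)
        then show ?thesis unfolding g_def by (simp add: abs_le_iff)
      qed
      have "- \<epsilon> \<le> integral\<^sup>L \<mu> (\<lambda>x. f (g j x) - f (\<phi> j x)) \<and> integral\<^sup>L \<mu> (\<lambda>x. f (g j x) - f (\<phi> j x)) \<le> \<epsilon>"
        by (rule int_bounds[OF P sets.top prob_space.emeasure_space_1[OF P]]) (use ia ib b in auto)
      then show ?thesis using Bochner_Integration.integral_diff[OF ia ib] by (simp add: abs_le_iff)
    qed
    have b: "\<bar>integral\<^sup>L \<mu> (\<lambda>x. f (\<phi> j x)) - integral\<^sup>L \<mu>S (\<lambda>x. f (\<phi> j x))\<bar> \<le> \<alpha> * D"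
    proof -
      have fphib: "(\<lambda>x. f (\<phi> j x)) \<in> borel_measurable borel"
        using fb \<phi>b[OF j] by (auto intro: measurable_comp[where f="\<phi> j" and g=f, unfolded comp_def])
      have e: "integral\<^sup>L \<mu> (\<lambda>x. f (\<phi> j x)) = integral\<^sup>L (incl_push \<mu>) (\<lambda>x. f (\<phi> j x))"
        by (rule goodX_push(2)[OF gx fphib, symmetric])
      show ?thesis
      proof (cases "\<alpha> = 0")
        case True
        have c: "\<phi> j x = \<phi> j y" for x y using lipschitz_onD[OF lip[OF j], of x y] True by simp
        have "integral\<^sup>L \<mu> (\<lambda>x. f (\<phi> j x)) = integral\<^sup>L \<mu> (\<lambda>x. f (\<phi> j undefined))" using c by metis
        also have "\<dots> = f (\<phi> j undefined)" using prob_space.prob_space[OF P] by simp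
        finally have 1: "integral\<^sup>L \<mu> (\<lambda>x. f (\<phi> j x)) = f (\<phi> j undefined)" .
        have "integral\<^sup>L \<mu>S (\<lambda>x. f (\<phi> j x)) = integral\<^sup>L \<mu>S (\<lambda>x. f (\<phi> j undefined))" using c by metis
        also have "\<dots> = f (\<phi> j undefined)" using prob_space.prob_space[OF PS] by simp
        finally have 2: "integral\<^sup>L \<mu>S (\<lambda>x. f (\<phi> j x)) = f (\<phi> j undefined)" .
        show ?thesis using 1 2 Dnn \<alpha> by simp
      next
        case False
        then have \<alpha>p: "0 < \<alpha>" using \<alpha> by simp
        define h where "h = (\<lambda>x. f (\<phi> j x) / \<alpha>)"
        have hl: "1-lipschitz_on UNIV h"
        proof (rule lipschitz_onI)
          fix x y
          have "dist (f (\<phi> j x)) (f (\<phi> j y)) \<le> \<alpha> * dist x y"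
            using lipschitz_onD[OF lip_comp[OF f lip[OF j]]] by simp
          then show "dist (h x) (h y) \<le> 1 * dist x y" unfolding h_def using \<alpha>p
            by (simp add: dist_real_def diff_divide_distrib[symmetric] divide_le_eq mult.commute)
        qed simp
        have "\<bar>integral\<^sup>L (incl_push \<mu>) h - integral\<^sup>L \<mu>S h\<bar> \<le> D"
          unfolding D_def by (rule dMK_upper[OF gE gS hl])
        then have "\<bar>integral\<^sup>L (incl_push \<mu>) (\<lambda>x. f (\<phi> j x)) / \<alpha> - integral\<^sup>L \<mu>S (\<lambda>x. f (\<phi> j x)) / \<alpha>\<bar> \<le> D"
          unfolding h_def by simp
        then have "\<bar>integral\<^sup>L (incl_push \<mu>) (\<lambda>x. f (\<phi> j x)) - integral\<^sup>L \<mu>S (\<lambda>x. f (\<phi> j x))\<bar> / \<alpha> \<le> D"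
          using \<alpha>p by (simp add: diff_divide_distrib[symmetric] abs_divide)
        then show ?thesis unfolding e using \<alpha>p by (simp add: divide_le_eq mult.commute)
      qed
    qed
    show ?thesis using a b by linarith
  qed
  have "\<bar>integral\<^sup>L (incl_push (markov_op L p g \<mu>)) f - integral\<^sup>L \<mu>S f\<bar>
      = \<bar>(\<Sum>j<L. p j * (integral\<^sup>L \<mu> (\<lambda>x. f (g j x)) - integral\<^sup>L \<mu>S (\<lambda>x. f (\<phi> j x))))\<bar>"
    unfolding I1 I2 I3 by (simp add: sum_subtractf right_diff_distrib)
  also have "\<dots> \<le> (\<Sum>j<L. \<bar>p j * (integral\<^sup>L \<mu> (\<lambda>x. f (g j x)) - integral\<^sup>L \<mu>S (\<lambda>x. f (\<phi> j x)))\<bar>)"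
    by (rule sum_abs)
  also have "\<dots> \<le> (\<Sum>j<L. p j * (\<epsilon> + \<alpha> * D))"
  proof (rule sum_mono)
    fix j assume "j \<in> {..<L}"
    then have j: "j < L" by simp
    show "\<bar>p j * (integral\<^sup>L \<mu> (\<lambda>x. f (g j x)) - integral\<^sup>L \<mu>S (\<lambda>x. f (\<phi> j x)))\<bar> \<le> p j * (\<epsilon> + \<alpha> * D)"
      using per[OF j] p[OF j] by (simp add: abs_mult mult_left_mono)
  qed
  also have "\<dots> = \<epsilon> + \<alpha> * D" by (simp add: sum_distrib_right[symmetric] psum)
  finally show ?thesis unfolding g_def D_def .
qed

theorem theorem4p3:
  fixes \<phi> :: "nat \<Rightarrow> 'a::complete_space \<Rightarrow> 'a"
    and p :: "nat \<Rightarrow> real" and L :: nat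
    and \<epsilon> :: real and Xh :: "'a set" and r :: "'a \<Rightarrow> 'a"
    and \<mu>S :: "'a measure"
  assumes L: "L \<ge> 1"
    and p_pos: "\<And>j. j < L \<Longrightarrow> p j > 0"
    and p_sum: "(\<Sum>j<L. p j) = 1"
    and contr: "\<And>j. j < L \<Longrightarrow> banach_contraction (\<phi> j)"
    and eps: "\<epsilon> > 0"
    and Xh_net: "eps_net \<epsilon> Xh" and Xh_proper: "proper_set Xh"
    and r_meas: "r \<in> borel_measurable borel"
    and r_proj: "eps_projection \<epsilon> Xh r"
    and hutch: "\<mu>S \<in> probs_cs (UNIV :: 'a set)" "markov_op L p \<phi> \<mu>S = \<mu>S"
  shows "\<forall>\<nu>\<in>probs_cs Xh.
     (\<forall>n::nat. d_MK (incl_push ((markov_op L p (\<lambda>j. r \<circ> \<phi> j) ^^ n) \<nu>)) \<mu>S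
        \<le> \<epsilon> / (1 - Max ((\<lambda>j. lip_const (\<phi> j)) ` {..<L}))
          + Max ((\<lambda>j. lip_const (\<phi> j)) ` {..<L}) ^ n * d_MK (incl_push \<nu>) \<mu>S)
   \<and> (\<exists>n0::nat. \<forall>n\<ge>n0. d_MK (incl_push ((markov_op L p (\<lambda>j. r \<circ> \<phi> j) ^^ n) \<nu>)) \<mu>S
        \<le> 2 * \<epsilon> / (1 - Max ((\<lambda>j. lip_const (\<phi> j)) ` {..<L})))"
proof -
  let ?\<alpha> = "Max ((\<lambda>j. lip_const (\<phi> j)) ` {..<L})"
  let ?T = "markov_op L p (\<lambda>j. r \<circ> \<phi> j)"
  have pp: "\<And>j. j < L \<Longrightarrow> 0 \<le> p j" using p_pos by (simp add: less_imp_le)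
  have fin: "finite ((\<lambda>j. lip_const (\<phi> j)) ` {..<L})" by simp
  have "0 \<in> {..<L}" using L by simp
  then have ne: "(\<lambda>j. lip_const (\<phi> j)) ` {..<L} \<noteq> {}" by blast
  have lc: "0 \<le> lip_const (\<phi> j)" "lip_const (\<phi> j) < 1" "(lip_const (\<phi> j))-lipschitz_on UNIV (\<phi> j)"
    if "j < L" for j using lip_const_facts[OF contr[OF that]] by auto
  have ge: "lip_const (\<phi> j) \<le> ?\<alpha>" if "j < L" for j by (rule Max_ge[OF fin]) (use that in auto)
  have \<alpha>0: "0 \<le> ?\<alpha>" using lc(1)[of 0] ge[of 0] L by linarith
  have \<alpha>1: "?\<alpha> < 1"
  proof -
    have "?\<alpha> \<in> (\<lambda>j. lip_const (\<phi> j)) ` {..<L}" by (rule Max_in[OF fin ne])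
    then obtain j where "j < L" "?\<alpha> = lip_const (\<phi> j)" by auto
    then show ?thesis using lc(2) by simp
  qed
  have lip: "\<And>j. j < L \<Longrightarrow> ?\<alpha>-lipschitz_on UNIV (\<phi> j)"
    using lipschitz_on_le lc(3) ge by blast
  have rr: "range r \<subseteq> Xh" and rd: "\<And>x. dist x (r x) \<le> \<epsilon>"
    using r_proj unfolding eps_projection_def by auto
  have gS: "goodB \<mu>S" using hutch(1) unfolding probs_cs_def goodB_def by auto
  have \<phi>b: "\<phi> j \<in> borel_measurable borel" if "j < L" for j using lip[OF that] by (rule lip_borel)
  have gm: "\<And>j. j < L \<Longrightarrow> (r \<circ> \<phi> j) \<in> borel_measurable borel" using \<phi>b r_meas by (auto intro: measurable_comp)
  have gr: "\<And>j. j < L \<Longrightarrow> range (r \<circ> \<phi> j) \<subseteq> Xh" using rr by auto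
  have c: "0 < \<epsilon> / (1 - ?\<alpha>)" using eps \<alpha>1 by simp
  show ?thesis
  proof
    fix \<nu> assume \<nu>: "\<nu> \<in> probs_cs Xh"
    have g0: "goodX Xh \<nu>"
    proof -
      obtain K where K: "compact K" "K \<subseteq> Xh" "emeasure \<nu> K = 1" using \<nu> unfolding probs_cs_def by auto
      have "finite (K \<inter> Xh)" using Xh_proper compact_imp_bounded[OF K(1)] unfolding proper_set_def by blast
      then have "finite K" using K(2) by (simp add: Int_absorb2)
      then show ?thesis using \<nu> K unfolding probs_cs_def goodX_def by auto
    qed
    have Te: "(?T ^^ Suc n) \<nu> = ?T ((?T ^^ n) \<nu>)" for n
      by (simp only: funpow.simps(2) comp_apply)
    have gn: "goodX Xh ((?T ^^ n) \<nu>)" for n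
    proof (induction n)
      case 0 then show ?case using g0 by (simp only: funpow_0)
    next
      case (Suc n)
      have "goodX Xh (?T ((?T ^^ n) \<nu>))" by (rule goodX_step[OF Suc gm gr pp p_sum])
      then show ?case by (simp only: Te)
    qed
    define D where "D n = d_MK (incl_push ((?T ^^ n) \<nu>)) \<mu>S" for n
    have Dnn: "0 \<le> D n" for n unfolding D_def by (rule dMK_nonneg[OF goodX_push(1)[OF gn] gS])
    have stepD: "D (Suc n) \<le> \<epsilon> + ?\<alpha> * D n" for n
    proof -
      have "d_MK (incl_push (?T ((?T ^^ n) \<nu>))) \<mu>S \<le> \<epsilon> + ?\<alpha> * D n"
        unfolding D_def
        by (rule dMK_least, rule step[OF gn gS pp p_sum lip \<alpha>0 r_meas rr rd hutch(2)]) auto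
      then show ?thesis unfolding D_def by (simp only: Te)
    qed
    have bound: "D n \<le> \<epsilon> / (1 - ?\<alpha>) + ?\<alpha> ^ n * D 0" for n
    proof (induction n)
      case 0 then show ?case using c by simp
    next
      case (Suc n)
      have "D (Suc n) \<le> \<epsilon> + ?\<alpha> * D n" by (rule stepD)
      also have "\<dots> \<le> \<epsilon> + ?\<alpha> * (\<epsilon> / (1 - ?\<alpha>) + ?\<alpha> ^ n * D 0)"
        using Suc \<alpha>0 by (simp add: mult_left_mono)
      also have "\<dots> = \<epsilon> / (1 - ?\<alpha>) + ?\<alpha> ^ Suc n * D 0"
        using \<alpha>1 by (simp add: field_simps)
      finally show ?case .
    qed
    have part1: "\<forall>n::nat. d_MK (incl_push ((?T ^^ n) \<nu>)) \<mu>S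
        \<le> \<epsilon> / (1 - ?\<alpha>) + ?\<alpha> ^ n * d_MK (incl_push \<nu>) \<mu>S"
      using bound unfolding D_def by simp
    have lim: "(\<lambda>n. ?\<alpha> ^ n * D 0) \<longlonglongrightarrow> 0 * D 0"
      by (intro tendsto_mult LIMSEQ_power_zero tendsto_const) (use \<alpha>0 \<alpha>1 in simp)
    have "eventually (\<lambda>n. ?\<alpha> ^ n * D 0 < \<epsilon> / (1 - ?\<alpha>)) sequentially"
      using order_tendstoD(2)[OF lim] c by simp
    then obtain n0 where n0: "\<And>n. n \<ge> n0 \<Longrightarrow> ?\<alpha> ^ n * D 0 < \<epsilon> / (1 - ?\<alpha>)"
      unfolding eventually_sequentially by blast
    have part2: "\<forall>n\<ge>n0. d_MK (incl_push ((?T ^^ n) \<nu>)) \<mu>S \<le> 2 * \<epsilon> / (1 - ?\<alpha>)"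
    proof (intro allI impI)
      fix n assume "n \<ge> n0"
      then have "D n \<le> \<epsilon> / (1 - ?\<alpha>) + \<epsilon> / (1 - ?\<alpha>)" using bound[of n] n0[of n] by linarith
      then show "d_MK (incl_push ((?T ^^ n) \<nu>)) \<mu>S \<le> 2 * \<epsilon> / (1 - ?\<alpha>)" unfolding D_def by simp
    qed
    show "(\<forall>n::nat. d_MK (incl_push ((?T ^^ n) \<nu>)) \<mu>S
        \<le> \<epsilon> / (1 - ?\<alpha>) + ?\<alpha> ^ n * d_MK (incl_push \<nu>) \<mu>S)
       \<and> (\<exists>n0::nat. \<forall>n\<ge>n0. d_MK (incl_push ((?T ^^ n) \<nu>)) \<mu>S \<le> 2 * \<epsilon> / (1 - ?\<alpha>))"
      using part1 part2 by blast
  qed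
qed

end
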